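(* Let $p\in[1,\infty)$ and $\zeta\in M_p^{n-1}$. If $u_k,u\in\mathrm{Conv}_{\mathrm{coe}}^{(n)}(\mathbb{R}^n)$ are such that $\delta_{\zeta,p}(u_k,u)\to 0$, then $u_k(x_0)\to+\infty$ as $k\to\infty$ for every $x_0\in\mathrm{int}(\mathbb{R}^n\setminus\mathrm{dom}\,u)$.
   Context: $\mathrm{Conv}_{\mathrm{coe}}^{(n)}(\mathbb{R}^n)$ is the set of proper, lower semicontinuous, convex, coercive $u:\mathbb{R}^n\to\mathbb{R}\cup\{+\infty\}$ with $\mathrm{dom}\,u=\{u<+\infty\}$ of dimension $n$. $M_p^{n-1}$ is the set of continuous, strictly decreasing $\zeta:\mathbb{R}\to(0,\infty)$ with $\int_0^\infty\zeta(t)^pt^{n-1}dt<\infty$. $\delta_{\zeta,p}(u,v)=\left(\int_{\mathbb{R}^n}|\zeta(u(x))-\zeta(v(x))|^pdx\right)^{1/p}$ with $\zeta(+\infty):=0$. *)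

theory Defs
  imports "HOL-Analysis.Analysis"
begin

text \<open>Extended-real valued functions on a Euclidean space 'a (dimension n = DIM('a)).\<close>

definition edom :: "('a \<Rightarrow> ereal) \<Rightarrow> 'a set" where
  "edom u = {x. u x < \<infinity>}"

definition proper_fun :: "('a \<Rightarrow> ereal) \<Rightarrow> bool" where
  "proper_fun u \<longleftrightarrow> (\<forall>x. u x \<noteq> -\<infinity>) \<and> (\<exists>x. u x < \<infinity>)"

definition lsc_fun :: "('a::topological_space \<Rightarrow> ereal) \<Rightarrow> bool" where
  "lsc_fun u \<longleftrightarrow> (\<forall>c::ereal. closed {x. u x \<le> c})"

definition convex_fun :: "('a::real_vector \<Rightarrow> ereal) \<Rightarrow> bool" where
  "convex_fun u \<longleftrightarrow> (\<forall>x y t. 0 \<le> t \<and> t \<le> 1 \<longrightarrow>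
      u ((1 - t) *\<^sub>R x + t *\<^sub>R y) \<le> ereal (1 - t) * u x + ereal t * u y)"

definition coercive_fun :: "('a::real_normed_vector \<Rightarrow> ereal) \<Rightarrow> bool" where
  "coercive_fun u \<longleftrightarrow> (u \<longlongrightarrow> \<infinity>) at_infinity"

definition Conv_coe :: "('a::euclidean_space \<Rightarrow> ereal) set" where
  "Conv_coe = {u. proper_fun u \<and> lsc_fun u \<and> convex_fun u \<and> coercive_fun u
                  \<and> aff_dim (edom u) = int DIM('a)}"

definition M_p :: "real \<Rightarrow> nat \<Rightarrow> (real \<Rightarrow> real) set" where
  "M_p p m = {\<zeta>. continuous_on UNIV \<zeta> \<and> (\<forall>s t. s < t \<longrightarrow> \<zeta> t < \<zeta> s) \<and> (\<forall>t. \<zeta> t > 0)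
      \<and> (\<integral>\<^sup>+ t. ennreal (indicator {0..} t * (\<zeta> t powr p * t ^ m)) \<partial>lborel) < \<infinity>}"

definition zeta_ext :: "(real \<Rightarrow> real) \<Rightarrow> ereal \<Rightarrow> real" where
  "zeta_ext \<zeta> a = (if a = \<infinity> then 0 else \<zeta> (real_of_ereal a))"

definition delta_zeta :: "(real \<Rightarrow> real) \<Rightarrow> real \<Rightarrow> ('a::euclidean_space \<Rightarrow> ereal)
      \<Rightarrow> ('a \<Rightarrow> ereal) \<Rightarrow> ennreal" where
  "delta_zeta \<zeta> p u v =
     (let I = (\<integral>\<^sup>+ x. ennreal (\<bar>zeta_ext \<zeta> (u x) - zeta_ext \<zeta> (v x)\<bar> powr p) \<partial>lborel)
      in if I = \<infinity> then \<infinity> else ennreal (enn2real I powr (1 / p)))"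

end

theory Submission
  imports Defs
begin

lemma convex_edom:
  assumes cf: "convex_fun u" and nm: "\<And>x. u x \<noteq> -\<infinity>"
  shows "convex (edom u)"
  unfolding convex_alt edom_def
proof safe
  fix x y and t::real assume h: "u x < \<infinity>" "u y < \<infinity>" "0 \<le> t" "t \<le> 1"
  obtain a b where ab: "u x = ereal a" "u y = ereal b" using h nm
    by (cases "u x"; cases "u y") auto
  have "u ((1 - t) *\<^sub>R x + t *\<^sub>R y) \<le> ereal (1 - t) * u x + ereal t * u y"
    using cf h unfolding convex_fun_def by blast
  also have "\<dots> = ereal ((1-t)*a + t*b)" using ab by simp
  finally show "u ((1 - t) *\<^sub>R x + t *\<^sub>R y) < \<infinity>"
    by (rule order.strict_trans1) simp
qed

lemma good_set:
  fixes u :: "'a::euclidean_space \<Rightarrow> ereal"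
  assumes "u \<in> Conv_coe"
  shows "\<exists>S M. compact S \<and> S \<subseteq> edom u \<and> (\<forall>x\<in>S. u x \<le> ereal M) \<and> emeasure lborel S > 0"
proof -
  have pr: "proper_fun u" and ls: "lsc_fun u" and cf: "convex_fun u"
    and ad: "aff_dim (edom u) = int DIM('a)"
    using assms unfolding Conv_coe_def by auto
  have nm: "\<And>x. u x \<noteq> -\<infinity>" using pr unfolding proper_fun_def by auto
  have ne: "edom u \<noteq> {}" using pr unfolding proper_fun_def edom_def by auto
  have cv: "convex (edom u)" using convex_edom[OF cf nm] .
  have "affine hull (edom u) = UNIV" using ad aff_dim_eq_full by blast
  then have "interior (edom u) \<noteq> {}"
    using rel_interior_interior rel_interior_eq_empty cv ne by metis
  then obtain y where "y \<in> interior (edom u)" by blast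
  then obtain s where s: "s > 0" "cball y s \<subseteq> edom u"
    by (meson open_contains_cball open_interior interior_subset subset_trans)
  define B where "B = (\<lambda>n::nat. cball y s \<inter> {x. u x \<le> ereal (real n)})"
  have clB: "closed {x. u x \<le> ereal (real n)}" for n using ls unfolding lsc_fun_def by blast
  have inc: "incseq B" unfolding B_def incseq_def
    by (auto intro: order_trans)
  have sets: "range B \<subseteq> sets lborel" unfolding B_def using clB
    by (auto intro!: borel_closed closed_Int)
  have un: "(\<Union>(range B)) = cball y s"
  proof safe
    fix x assume x: "x \<in> cball y s"
    then have "u x < \<infinity>" using s unfolding edom_def by auto
    then obtain a where a: "u x = ereal a" using nm[of x]
      by (cases "u x") auto
    obtain n::nat where "a \<le> real n" using real_arch_simple by blast
    then show "x \<in> \<Union>(range B)" using x a unfolding B_def by auto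
  qed (auto simp: B_def)
  have pos: "emeasure lborel (cball y s) > 0"
    using emeasure_cball[of s y] s by simp
  have "\<exists>n. emeasure lborel (B n) > 0"
  proof (rule ccontr)
    assume "\<not> ?thesis"
    then have "\<And>n. emeasure lborel (B n) = 0" by auto
    then have "(SUP n. emeasure lborel (B n)) = 0" by simp
    then show False using SUP_emeasure_incseq[OF sets inc] un pos by simp
  qed
  then obtain n where n: "emeasure lborel (B n) > 0" by blast
  show ?thesis
  proof (intro exI conjI)
    show "compact (B n)" unfolding B_def using clB
      by (simp add: compact_Int_closed)
    show "B n \<subseteq> edom u" using s unfolding B_def by auto
    show "\<forall>x\<in>B n. u x \<le> ereal (real n)" unfolding B_def by auto
  qed (rule n)
qed


lemma conv_props:
  assumes "u \<in> Conv_coe"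
  shows "\<And>x. u x \<noteq> -\<infinity>" and "convex_fun u" and "\<And>c. closed {x. u x \<le> c}"
  using assms unfolding Conv_coe_def proper_fun_def lsc_fun_def by auto

theorem lemma3p9:
  fixes p :: real and \<zeta> :: "real \<Rightarrow> real"
    and uk :: "nat \<Rightarrow> 'a::euclidean_space \<Rightarrow> ereal" and u :: "'a \<Rightarrow> ereal"
  assumes "1 \<le> p"
    and "\<zeta> \<in> M_p p (DIM('a) - 1)"
    and "\<And>k. uk k \<in> Conv_coe"
    and "u \<in> Conv_coe"
    and "(\<lambda>k. delta_zeta \<zeta> p (uk k) u) \<longlonglongrightarrow> 0"
    and "x0 \<in> interior (UNIV - edom u)"
  shows "(\<lambda>k. uk k x0) \<longlonglongrightarrow> \<infinity>"
proof -
  have zdec: "\<And>s t. s < t \<Longrightarrow> \<zeta> t < \<zeta> s" and zpos: "\<And>t. \<zeta> t > 0"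
    using assms(2) unfolding M_p_def by auto
  have unm: "\<And>x. u x \<noteq> -\<infinity>" using conv_props[OF assms(4)] by blast
  have uknm: "\<And>k x. uk k x \<noteq> -\<infinity>" using conv_props[OF assms(3)] by blast
  have ukcf: "\<And>k. convex_fun (uk k)" using conv_props[OF assms(3)] by blast
  have ukcl: "\<And>k c. closed {x. uk k x \<le> c}" using conv_props[OF assms(3)] by blast
  obtain r where r: "r > 0" "ball x0 r \<subseteq> UNIV - edom u"
    using assms(6) by (meson open_contains_ball_eq open_interior interior_subset subset_trans)
  obtain S M where S: "compact S" "S \<subseteq> edom u" "\<forall>x\<in>S. u x \<le> ereal M" "emeasure lborel S > 0"
    using good_set[OF assms(4)] by blast
  obtain D where D: "D > 0" "\<forall>a\<in>S. norm (a - x0) \<le> D"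
    using compact_imp_bounded[OF S(1)] bounded_pos_less bounded_any_center
    by (metis bounded_subset_ballD less_eq_real_def dist_norm dist_commute mem_ball subsetD)
  define \<epsilon> where "\<epsilon> = r / (D + r)"
  have eps: "0 < \<epsilon>" "\<epsilon> < 1" "\<epsilon> * D < r"
    using D r unfolding \<epsilon>_def by (auto simp: field_simps)
  define d where "d = \<zeta> M - \<zeta> (M+1)"
  have d: "d > 0" using zdec[of M "M+1"] unfolding d_def by simp
  have Sfin: "emeasure lborel S < \<infinity>" using emeasure_bounded_finite compact_imp_bounded S(1) by blast
  have Sb: "S \<in> sets lborel" using S(1) by (simp add: borel_compact)
  have mS: "measure lborel S > 0" using S(4) Sfin
    by (simp add: emeasure_eq_ennreal_measure)
  show ?thesis unfolding tendsto_PInfty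
  proof
    fix C :: real
    define L where "L = (1-\<epsilon>)*C + \<epsilon>*(M+1)"
    define m where "m = min (d powr p) (\<zeta> L powr p * \<epsilon>^DIM('a))"
    have m: "m > 0" unfolding m_def using d zpos[of L] eps by simp
    define K where "K = m * measure lborel S"
    have K: "K > 0" unfolding K_def using m mS by simp
    define K' where "K' = min 1 (K powr (1/p))"
    have K': "K' > 0" unfolding K'_def using K by simp
    have key: "ennreal K' \<le> delta_zeta \<zeta> p (uk k) u" if C: "uk k x0 \<le> ereal C" for k
    proof -
      define I where "I = (\<integral>\<^sup>+ x. ennreal (\<bar>zeta_ext \<zeta> (uk k x) - zeta_ext \<zeta> (u x)\<bar> powr p) \<partial>lborel)"
      define A where "A = S \<inter> {x. uk k x \<le> ereal (M+1)}"
      have Acomp: "compact A" unfolding A_def using S(1) ukcl by (simp add: compact_Int_closed)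
      have AS: "A \<subseteq> S" unfolding A_def by auto
      define T where "T = (\<lambda>a. \<epsilon> *\<^sub>R a + (1-\<epsilon>) *\<^sub>R x0) ` A"
      have Tcomp: "compact T" unfolding T_def using Acomp
        by (intro compact_continuous_image) (auto intro!: continuous_intros)
      have Tball: "T \<subseteq> ball x0 r"
      proof
        fix y assume "y \<in> T"
        then obtain a where a: "a \<in> A" "y = \<epsilon> *\<^sub>R a + (1-\<epsilon>) *\<^sub>R x0" unfolding T_def by blast
        have "y - x0 = \<epsilon> *\<^sub>R (a - x0)" using a(2) by (simp add: algebra_simps)
        then have "norm (y - x0) = \<epsilon> * norm (a - x0)" using eps by simp
        also have "\<dots> \<le> \<epsilon> * D" using D(2) a(1) AS eps by (intro mult_left_mono) auto
        finally show "y \<in> ball x0 r" using eps by (simp add: dist_norm norm_minus_commute)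
      qed
      have Tinf: "u y = \<infinity>" if "y \<in> T" for y
        using Tball r(2) that unfolding edom_def by (auto simp: top.not_eq_extremum)
      have TL: "uk k y \<le> ereal L" if "y \<in> T" for y
      proof -
        obtain a where a: "a \<in> A" "y = \<epsilon> *\<^sub>R a + (1-\<epsilon>) *\<^sub>R x0" using \<open>y \<in> T\<close> unfolding T_def by blast
        have ya: "y = (1 - \<epsilon>) *\<^sub>R x0 + \<epsilon> *\<^sub>R a" using a(2) by simp
        have "uk k a \<le> ereal (M+1)" using a(1) unfolding A_def by auto
        then obtain b where b: "uk k a = ereal b" "b \<le> M+1" using uknm[of k a] by (cases "uk k a") auto
        obtain c where c: "uk k x0 = ereal c" "c \<le> C" using C uknm[of k x0] by (cases "uk k x0") auto
        have "uk k y \<le> ereal (1 - \<epsilon>) * uk k x0 + ereal \<epsilon> * uk k a"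
          using ukcf[of k] eps unfolding convex_fun_def ya by auto
        also have "\<dots> = ereal ((1-\<epsilon>)*c + \<epsilon>*b)" using b c by simp
        also have "\<dots> \<le> ereal L" unfolding L_def using b c eps
          by (simp add: add_mono mult_left_mono)
        finally show ?thesis .
      qed
      have ST: "(S - A) \<inter> T = {}" using Tinf S(2) unfolding edom_def by auto
      have pt: "ennreal (d powr p) * indicator (S - A) x + ennreal (\<zeta> L powr p) * indicator T x
          \<le> ennreal (\<bar>zeta_ext \<zeta> (uk k x) - zeta_ext \<zeta> (u x)\<bar> powr p)" for x
      proof (cases "x \<in> S - A")
        case True
        then have xT: "x \<notin> T" using ST by auto
        obtain v where v: "u x = ereal v" "v \<le> M" using True S(3) unm[of x] by (cases "u x") auto
        have gt: "uk k x > ereal (M+1)" using True unfolding A_def by auto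
        have "zeta_ext \<zeta> (uk k x) < \<zeta> (M+1)"
        proof (cases "uk k x")
          case (real w)
          then show ?thesis using gt zdec[of "M+1" w] unfolding zeta_ext_def by auto
        qed (use zpos uknm gt in \<open>auto simp: zeta_ext_def\<close>)
        moreover have "zeta_ext \<zeta> (u x) \<ge> \<zeta> M" using v zdec[of v M] unfolding zeta_ext_def
          by (cases "v = M") auto
        ultimately have "d \<le> \<bar>zeta_ext \<zeta> (uk k x) - zeta_ext \<zeta> (u x)\<bar>" unfolding d_def by simp
        then have "d powr p \<le> \<bar>zeta_ext \<zeta> (uk k x) - zeta_ext \<zeta> (u x)\<bar> powr p"
          using d assms(1) by (intro powr_mono2) auto
        then show ?thesis using True xT by (simp add: ennreal_leI)
      next
        case False
        show ?thesis
        proof (cases "x \<in> T")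
          case True
          have ux: "zeta_ext \<zeta> (u x) = 0" using Tinf[OF True] unfolding zeta_ext_def by simp
          obtain w where w: "uk k x = ereal w" "w \<le> L" using TL[OF True] uknm[of k x]
            by (cases "uk k x") auto
          have "\<zeta> L \<le> zeta_ext \<zeta> (uk k x)" using w zdec[of w L] unfolding zeta_ext_def
            by (cases "w = L") auto
          then have "\<zeta> L powr p \<le> \<bar>zeta_ext \<zeta> (uk k x) - zeta_ext \<zeta> (u x)\<bar> powr p"
            using zpos[of L] assms(1) ux by (intro powr_mono2) auto
          then show ?thesis using True False by (simp add: ennreal_leI)
        qed (use False in simp)
      qed
      have Ab: "A \<in> sets lborel" using Acomp by (simp add: borel_compact)
      have Tb: "T \<in> sets lborel" using Tcomp by (simp add: borel_compact)
      have SAb: "S - A \<in> sets lborel" using Ab Sb by auto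
      have mT: "emeasure lborel T = ennreal (\<epsilon> ^ DIM('a)) * emeasure lborel A"
      proof -
        have "emeasure lebesgue T = \<bar>\<epsilon>\<bar> ^ DIM('a) * emeasure lebesgue A"
          unfolding T_def by (rule emeasure_lebesgue_affine)
        then show ?thesis using Ab Tb eps by simp
      qed
      have "(\<integral>\<^sup>+ x. ennreal (d powr p) * indicator (S - A) x + ennreal (\<zeta> L powr p) * indicator T x \<partial>lborel)
          = ennreal (d powr p) * emeasure lborel (S - A) + ennreal (\<zeta> L powr p) * emeasure lborel T"
        using SAb Tb by (simp add: nn_integral_add nn_integral_cmult_indicator)
      also have "\<dots> = ennreal (d powr p) * emeasure lborel (S - A) + ennreal (\<zeta> L powr p * \<epsilon> ^ DIM('a)) * emeasure lborel A"
        using mT zpos[of L] eps by (simp add: ennreal_mult mult.assoc)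
      also have "\<dots> \<ge> ennreal m * emeasure lborel (S - A) + ennreal m * emeasure lborel A"
        unfolding m_def by (intro add_mono mult_right_mono ennreal_leI) auto
      also have "ennreal m * emeasure lborel (S - A) + ennreal m * emeasure lborel A = ennreal m * emeasure lborel S"
      proof -
        have "emeasure lborel (S - A) + emeasure lborel A = emeasure lborel ((S - A) \<union> A)"
          using SAb Ab by (intro plus_emeasure) auto
        also have "(S - A) \<union> A = S" using AS by auto
        finally show ?thesis by (simp add: distrib_left[symmetric])
      qed
      also have "ennreal m * emeasure lborel S = ennreal K"
        unfolding K_def using Sfin m by (simp add: emeasure_eq_ennreal_measure ennreal_mult)
      finally have "ennreal K \<le> (\<integral>\<^sup>+ x. ennreal (d powr p) * indicator (S - A) x + ennreal (\<zeta> L powr p) * indicator T x \<partial>lborel)" .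
      also have "\<dots> \<le> I" unfolding I_def by (intro nn_integral_mono pt)
      finally have IK: "ennreal K \<le> I" .
      show ?thesis
      proof (cases "I = \<infinity>")
        case True
        then show ?thesis unfolding delta_zeta_def I_def[symmetric] Let_def K'_def by simp
      next
        case False
        then have "K \<le> enn2real I" using enn2real_mono[OF IK] K
          by (simp add: top.not_eq_extremum)
        then have "K powr (1/p) \<le> enn2real I powr (1/p)"
          using K assms(1) by (intro powr_mono2) auto
        then show ?thesis using False unfolding delta_zeta_def I_def[symmetric] Let_def K'_def
          by (simp add: ennreal_leI)
      qed
    qed
    have "eventually (\<lambda>k. delta_zeta \<zeta> p (uk k) u < ennreal K') sequentially"
      using assms(5) K' by (intro order_tendstoD(2)) auto
    then show "eventually (\<lambda>k. uk k x0 > ereal C) sequentially"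
      by eventually_elim (use key in \<open>force simp: not_le[symmetric]\<close>)
  qed
qed

end
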